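(* Let $S_A>0$, $\theta\geq0$, $\lambda\geq0$, $B\geq1$ an integer, $V_k\in(0,1]$ and $S_M\geq0$. Let $\rho(\zeta)=\zeta e^{-\zeta}$, $\hat\nu(V,\Lambda)=V/(1+V\Lambda)$, and for $\zeta\in(0,1)$ let $$g(S_M,\zeta,V_k)=\sum_{r=0}^{B}\binom{B}{r}\rho(\zeta)^r(1-\rho(\zeta))^{B-r}\,\hat\nu\left(V_k,\frac{rS_AS_M}{S_A+S_M}\right)\frac{r-\rho(\zeta)B}{\rho(\zeta)(1-\rho(\zeta))}+\lambda B\frac{e^{\zeta}}{1-\zeta}(1+\theta S_M).$$ Then $\zeta\mapsto g(S_M,\zeta,V_k)$ is an increasing function of $\zeta\in(0,1)$.
   Context: In the decentralized myopic sensing policy (large-network limit, $B$ collision channels), $g$ is, up to the positive factor $e^{\zeta}/(1-\zeta)$, the derivative with respect to the normalized activation probability $\zeta$ of the one-slot cost $\sum_r\mathcal B_B(r;\rho(\zeta))\hat\nu(V_k,rS_AS_M/(S_A+S_M))+\lambda\zeta B(1+\theta S_M)$; here $V_k$ is the prior variance, $S_A$ the ambient SNR, $S_M$ the local measurement SNR. *)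

theory Defs
  imports Complex_Main
begin

definition rho :: "real \<Rightarrow> real" where
  "rho \<zeta> = \<zeta> * exp (- \<zeta>)"

definition nu_hat :: "real \<Rightarrow> real \<Rightarrow> real" where
  "nu_hat V \<Lambda> = V / (1 + V * \<Lambda>)"

definition g_fun :: "real \<Rightarrow> real \<Rightarrow> real \<Rightarrow> nat \<Rightarrow> real \<Rightarrow> real \<Rightarrow> real \<Rightarrow> real" where
  "g_fun S_A \<theta> lam B S_M \<zeta> V_k =
     (\<Sum>r=0..B. real (B choose r) * rho \<zeta> ^ r * (1 - rho \<zeta>) ^ (B - r)
        * nu_hat V_k (real r * S_A * S_M / (S_A + S_M))
        * ((real r - rho \<zeta> * real B) / (rho \<zeta> * (1 - rho \<zeta>))))
     + lam * real B * (exp \<zeta> / (1 - \<zeta>)) * (1 + \<theta> * S_M)"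

end

theory Submission imports Defs begin

definition E :: "nat \<Rightarrow> (nat \<Rightarrow> real) \<Rightarrow> real \<Rightarrow> real" where
  "E m d p = (\<Sum>r=0..m. real (m choose r) * p ^ r * (1 - p) ^ (m - r) * d r)"

lemma identA:
  fixes p :: real
  shows "(\<Sum>r=0..Suc k. real (Suc k choose r) * p ^ r * (1 - p) ^ (Suc k - r) * f r * (real r - real (Suc k) * p))
   = real (Suc k) * p * (1 - p) * E k (\<lambda>s. f (Suc s) - f s) p"
proof -
  let ?n = "Suc k"
  have split: "(\<Sum>r=0..?n. real (?n choose r) * p ^ r * (1 - p) ^ (?n - r) * f r * (real r - real ?n * p))
     = (\<Sum>r=0..?n. real (r * (?n choose r)) * p ^ r * (1 - p) ^ (?n - r) * f r * (1 - p))
     - (\<Sum>r=0..?n. real ((?n - r) * (?n choose r)) * p ^ r * (1 - p) ^ (?n - r) * f r * p)"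
    unfolding sum_subtractf[symmetric]
  proof (rule sum.cong[OF refl])
    fix r assume "r \<in> {0..?n}"
    hence "real (?n - r) = real ?n - real r" by auto
    thus "real (?n choose r) * p ^ r * (1 - p) ^ (?n - r) * f r * (real r - real ?n * p) =
      real (r * (?n choose r)) * p ^ r * (1 - p) ^ (?n - r) * f r * (1 - p) -
      real ((?n - r) * (?n choose r)) * p ^ r * (1 - p) ^ (?n - r) * f r * p"
      by (simp only: of_nat_mult) (simp add: algebra_simps)
  qed
  have S1: "(\<Sum>r=0..?n. real (r * (?n choose r)) * p ^ r * (1 - p) ^ (?n - r) * f r * (1 - p))
      = (\<Sum>s=0..k. real ?n * p * (1-p) * (real (k choose s) * p ^ s * (1 - p) ^ (k - s) * f (Suc s)))"
  proof -
    have T: "\<And>s. s \<in> {0..k} \<Longrightarrow> real (Suc s * (Suc k choose Suc s)) * p ^ Suc s * (1 - p) ^ (Suc k - Suc s) * f (Suc s) * (1 - p) =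
         real (Suc k) * p * (1 - p) * (real (k choose s) * p ^ s * (1 - p) ^ (k - s) * f (Suc s))"
    proof -
      fix s assume "s \<in> {0..k}"
      have "real (Suc s * (Suc k choose Suc s)) = real (Suc k * (k choose s))"
        using Suc_times_binomial by metis
      thus "real (Suc s * (Suc k choose Suc s)) * p ^ Suc s * (1 - p) ^ (Suc k - Suc s) * f (Suc s) * (1 - p) =
           real (Suc k) * p * (1 - p) * (real (k choose s) * p ^ s * (1 - p) ^ (k - s) * f (Suc s))"
        by (simp only: of_nat_mult power_Suc) (simp add: algebra_simps)
    qed
    have H: "(\<Sum>s=0..k. real (Suc s * (Suc k choose Suc s)) * p ^ Suc s * (1 - p) ^ (Suc k - Suc s) * f (Suc s) * (1 - p)) =
         (\<Sum>s=0..k. real (Suc k) * p * (1 - p) * (real (k choose s) * p ^ s * (1 - p) ^ (k - s) * f (Suc s)))"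
      by (rule sum.cong[OF refl]) (rule T)
    show ?thesis by (subst sum.atLeast0_atMost_Suc_shift, unfold comp_def H) simp
  qed
  have S2: "(\<Sum>r=0..?n. real ((?n - r) * (?n choose r)) * p ^ r * (1 - p) ^ (?n - r) * f r * p)
      = (\<Sum>s=0..k. real ?n * p * (1-p) * (real (k choose s) * p ^ s * (1 - p) ^ (k - s) * f s))"
  proof -
    have T: "\<And>s. s \<in> {0..k} \<Longrightarrow> real ((Suc k - s) * (Suc k choose s)) * p ^ s * (1 - p) ^ (Suc k - s) * f s * p =
         real (Suc k) * p * (1 - p) * (real (k choose s) * p ^ s * (1 - p) ^ (k - s) * f s)"
    proof -
      fix s assume "s \<in> {0..k}"
      hence "Suc k - s = Suc (k - s)" by auto
      moreover have "real ((Suc k - s) * (Suc k choose s)) = real (Suc k * (k choose s))"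
        using binomial_absorb_comp[of "Suc k" s] by simp
      ultimately show "real ((Suc k - s) * (Suc k choose s)) * p ^ s * (1 - p) ^ (Suc k - s) * f s * p =
           real (Suc k) * p * (1 - p) * (real (k choose s) * p ^ s * (1 - p) ^ (k - s) * f s)"
        by (simp only: of_nat_mult power_Suc) (simp add: algebra_simps)
    qed
    have H: "(\<Sum>s=0..k. real ((Suc k - s) * (Suc k choose s)) * p ^ s * (1 - p) ^ (Suc k - s) * f s * p) =
         (\<Sum>s=0..k. real (Suc k) * p * (1 - p) * (real (k choose s) * p ^ s * (1 - p) ^ (k - s) * f s))"
      by (rule sum.cong[OF refl]) (rule T)
    show ?thesis by (subst sum.atLeast0_atMost_Suc, unfold H) simp
  qed
  show ?thesis
    unfolding split S1 S2 E_def sum_subtractf[symmetric] sum_distrib_left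
    by (rule sum.cong[OF refl]) (simp add: algebra_simps)
qed

lemma pow_pred: fixes p :: real assumes "p \<noteq> 0" shows "real r * p ^ (r - 1) = real r * p ^ r / p"
  using assms by (cases r) auto

lemma term_deriv:
  fixes p c :: real assumes "0 < p" "p < 1" "r \<le> m"
  shows "((\<lambda>x. c * x ^ r * (1 - x) ^ (m - r)) has_real_derivative
     (c * p ^ r * (1 - p) ^ (m - r) * (real r - real m * p) / (p * (1 - p)))) (at p)"
proof -
  have a: "real r * p ^ (r - 1) = real r * p ^ r / p" using assms by (intro pow_pred) auto
  have b: "real (m - r) * (1 - p) ^ (m - r - 1) = real (m - r) * (1 - p) ^ (m - r) / (1 - p)"
    using assms by (intro pow_pred) auto
  have mr: "real (m - r) = real m - real r" using assms by auto
  have "((\<lambda>x. c * x ^ r * (1 - x) ^ (m - r)) has_real_derivative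
     (c * (real r * p ^ (r - 1)) * (1 - p) ^ (m - r) - c * p ^ r * (real (m - r) * (1 - p) ^ (m - r - 1)))) (at p)"
    by (auto intro!: derivative_eq_intros simp: algebra_simps)
  also have "c * (real r * p ^ (r - 1)) * (1 - p) ^ (m - r) - c * p ^ r * (real (m - r) * (1 - p) ^ (m - r - 1))
     = c * p ^ r * (1 - p) ^ (m - r) * (real r - real m * p) / (p * (1 - p))"
    unfolding a b unfolding mr using assms by (simp add: field_simps)
  finally show ?thesis .
qed

lemma E_deriv:
  fixes p :: real assumes "0 < p" "p < 1"
  shows "((\<lambda>x. E m d x) has_real_derivative
     (\<Sum>r=0..m. real (m choose r) * p ^ r * (1 - p) ^ (m - r) * d r * (real r - real m * p) / (p * (1 - p)))) (at p)"
proof -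
  have "((\<lambda>x. \<Sum>r=0..m. (real (m choose r) * d r) * x ^ r * (1 - x) ^ (m - r)) has_real_derivative
     (\<Sum>r=0..m. (real (m choose r) * d r) * p ^ r * (1 - p) ^ (m - r) * (real r - real m * p) / (p * (1 - p)))) (at p)"
    by (rule DERIV_sum) (rule term_deriv, use assms in auto)
  thus ?thesis unfolding E_def by (simp add: algebra_simps)
qed

lemma E_nonneg: assumes "\<And>s. d s \<ge> 0" "0 \<le> p" "p \<le> 1" shows "E m d p \<ge> 0"
  unfolding E_def using assms by (intro sum_nonneg mult_nonneg_nonneg) auto

lemma E_mono:
  assumes dm: "\<And>s. d s \<le> d (Suc s)" and "0 < a" "a \<le> b" "b < 1"
  shows "E m d a \<le> E m d b"
proof (rule DERIV_nonneg_imp_increasing_open[OF \<open>a \<le> b\<close>])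
  fix x assume x: "a < x" "x < b"
  hence x0: "0 < x" "x < 1" using assms by auto
  let ?y = "(\<Sum>r=0..m. real (m choose r) * x ^ r * (1 - x) ^ (m - r) * d r * (real r - real m * x) / (x * (1 - x)))"
  have "?y \<ge> 0"
  proof (cases m)
    case 0 thus ?thesis by simp
  next
    case (Suc k)
    have "?y = (\<Sum>r=0..Suc k. real (Suc k choose r) * x ^ r * (1 - x) ^ (Suc k - r) * d r * (real r - real (Suc k) * x)) / (x * (1 - x))"
      unfolding Suc sum_divide_distrib ..
    also have "\<dots> = real (Suc k) * E k (\<lambda>s. d (Suc s) - d s) x"
      unfolding identA using x0 by (simp add: field_simps)
    also have "\<dots> \<ge> 0" using x0 dm by (intro mult_nonneg_nonneg E_nonneg) auto
    finally show ?thesis .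
  qed
  thus "\<exists>y. ((\<lambda>x. E m d x) has_real_derivative y) (at x) \<and> 0 \<le> y"
    using E_deriv[OF x0] by blast
next
  show "continuous_on {a..b} (E m d)" unfolding E_def by (intro continuous_intros)
qed

lemma inv_convex:
  fixes V t x :: real assumes "V > 0" "t \<ge> 0" "x \<ge> 0"
  shows "V / (1 + t * (x + 1)) - V / (1 + t * x) \<le> V / (1 + t * (x + 2)) - V / (1 + t * (x + 1))"
proof -
  define u where "u = 1 + t * (x + 1)"
  have "t * x \<ge> 0" using assms by simp
  hence u1: "u - t \<ge> 1" unfolding u_def by (simp add: algebra_simps)
  have e1: "1 + t * x = u - t" "1 + t * (x + 2) = u + t" unfolding u_def by (auto simp: algebra_simps)
  have "1 / (u - t) + 1 / (u + t) - 2 / u = 2 * t^2 / (u * (u - t) * (u + t))"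
  proof -
    have "u - t \<noteq> 0" "u + t \<noteq> 0" "u \<noteq> 0" using u1 assms by auto
    thus ?thesis by (simp add: divide_simps) (simp add: algebra_simps power2_eq_square)
  qed
  also have "\<dots> \<ge> 0" using u1 assms by (intro divide_nonneg_pos mult_pos_pos) auto
  finally have "2 / u \<le> 1 / (u - t) + 1 / (u + t)" by simp
  hence "V * (2 / u) \<le> V * (1 / (u - t) + 1 / (u + t))" using assms by (intro mult_left_mono) auto
  thus ?thesis unfolding e1 u_def[symmetric] by (simp add: field_simps)
qed

lemma rho_mono: assumes "0 < a" "a \<le> b" "b < 1" shows "rho a \<le> rho b"
proof (rule DERIV_nonneg_imp_increasing_open[OF \<open>a \<le> b\<close>])
  fix x assume x: "a < x" "x < b"
  have "(rho has_real_derivative (exp (-x) - x * exp (-x))) (at x)"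
    unfolding rho_def[abs_def] by (auto intro!: derivative_eq_intros)
  moreover have "exp (-x) - x * exp (-x) \<ge> 0" using x assms
    by (simp add: algebra_simps) 
  ultimately show "\<exists>y. (rho has_real_derivative y) (at x) \<and> 0 \<le> y" by blast
next
  show "continuous_on {a..b} rho" unfolding rho_def[abs_def] by (intro continuous_intros)
qed

lemma rho_bounds: assumes "0 < x" "x < 1" shows "0 < rho x" "rho x < 1"
proof -
  show "0 < rho x" unfolding rho_def using assms by simp
  have "exp (-x) \<le> 1" using assms by simp
  hence "x * exp (-x) \<le> x" using assms by (simp add: mult_left_le)
  thus "rho x < 1" unfolding rho_def using assms by linarith
qed

theorem proposition6:
  fixes S_A \<theta> lam V_k S_M :: real and B :: nat
  assumes "S_A > 0" and "\<theta> \<ge> 0" and "lam \<ge> 0" and "B \<ge> 1"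
    and "0 < V_k" and "V_k \<le> 1" and "S_M \<ge> 0"
  shows "mono_on {0<..<1} (\<lambda>\<zeta>. g_fun S_A \<theta> lam B S_M \<zeta> V_k)"
proof (rule mono_onI)
  obtain k where Bk: "B = Suc k" using assms(4) by (cases B) auto
  define h where "h r = nu_hat V_k (real r * S_A * S_M / (S_A + S_M))" for r :: nat
  define t where "t = V_k * (S_A * S_M / (S_A + S_M))"
  have t0: "t \<ge> 0" unfolding t_def using assms by simp
  have hx: "h r = V_k / (1 + t * real r)" for r
    unfolding h_def nu_hat_def t_def by (simp add: algebra_simps)
  have dm: "h (Suc s) - h s \<le> h (Suc (Suc s)) - h (Suc s)" for s
    using inv_convex[OF assms(5) t0, of "real s"] unfolding hx by (simp add: algebra_simps)
  have sumeq: "(\<Sum>r=0..B. real (B choose r) * p ^ r * (1 - p) ^ (B - r) * h r * ((real r - p * real B) / (p * (1 - p))))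
     = real B * E k (\<lambda>s. h (Suc s) - h s) p" if "0 < p" "p < 1" for p :: real
  proof -
    have "(\<Sum>r=0..B. real (B choose r) * p ^ r * (1 - p) ^ (B - r) * h r * ((real r - p * real B) / (p * (1 - p))))
      = (\<Sum>r=0..Suc k. real (Suc k choose r) * p ^ r * (1 - p) ^ (Suc k - r) * h r * (real r - real (Suc k) * p)) / (p * (1 - p))"
      unfolding Bk sum_divide_distrib by (rule sum.cong) (auto simp: algebra_simps)
    also have "\<dots> = real B * E k (\<lambda>s. h (Suc s) - h s) p"
      unfolding identA Bk using that by (simp add: field_simps)
    finally show ?thesis .
  qed
  fix a b :: real assume a: "a \<in> {0<..<1}" and b: "b \<in> {0<..<1}" and ab: "a \<le> b"
  have ra: "0 < rho a" "rho a < 1" using rho_bounds a by auto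
  have rb: "0 < rho b" "rho b < 1" using rho_bounds b by auto
  have rab: "rho a \<le> rho b" using rho_mono a b ab by auto
  have part1: "real B * E k (\<lambda>s. h (Suc s) - h s) (rho a) \<le> real B * E k (\<lambda>s. h (Suc s) - h s) (rho b)"
    by (intro mult_left_mono E_mono[OF _ ra(1) rab rb(2)] dm) auto
  have "exp a / (1 - a) \<le> exp b / (1 - b)"
    using a b ab by (intro frac_le) auto
  hence part2: "lam * real B * (exp a / (1 - a)) * (1 + \<theta> * S_M) \<le> lam * real B * (exp b / (1 - b)) * (1 + \<theta> * S_M)"
    using assms by (intro mult_right_mono mult_left_mono) auto
  show "g_fun S_A \<theta> lam B S_M a V_k \<le> g_fun S_A \<theta> lam B S_M b V_k"
    unfolding g_fun_def h_def[symmetric] sumeq[OF ra] sumeq[OF rb]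
    using part1 part2 by linarith
qed

end
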